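(* Let $L:\mathbb{R}^d\to\mathbb{R}^{\mathcal{Y}}_+$ be polyhedral and $\gamma:\Delta_{\mathcal{Y}}\rightrightarrows\mathcal{R}$ a finite property. If $L$ indirectly elicits $\gamma$, then there exists $\epsilon_0>0$ such that for all $0<\epsilon\le\epsilon_0$, the general $\epsilon$-thickened link construction for $L,\gamma,\epsilon,\|\cdot\|_\infty$ produces a link, i.e., the link envelope satisfies $\Psi(u)\neq\emptyset$ for all $u\in\mathbb{R}^d$.
   Context: $\mathcal{Y}$ is a finite label set, $\Delta_{\mathcal{Y}}$ the simplex, $\mathbb{R}^{\mathcal{Y}}_+$ the nonnegative orthant. A property $\gamma:\Delta_{\mathcal{Y}}\rightrightarrows\mathcal{R}$ maps each $p$ to a nonempty subset of $\mathcal{R}$; finite if $\mathcal{R}$ finite; level sets $\gamma_r=\{p:r\in\gamma(p)\}$. $L$ polyhedral: each coordinate $u\mapsto L(u)_y$ is a max of finitely many affine functions; it elicits $\Gamma(p)=\arg\min_u\langle p,L(u)\rangle$. $L$ indirectly elicits $\gamma$ if for all $u$ there is $r$ with $\Gamma_u\subseteq\gamma_r$. General construction for $L,\gamma,\epsilon,\|\cdot\|$: $\mathcal{U}=\{\Gamma(p):p\in\Delta_{\mathcal{Y}}\}$, $\Gamma_U=\{p:\Gamma(p)=U\}$, $R_U=\{r\in\mathcal{R}:\Gamma_U\subseteq\gamma_r\}$; initialize $\Psi(u)=\mathcal{R}$; for each $U\in\mathcal{U}$ and each $u$ with $\inf_{u^*\in U}\|u^*-u\|<\epsilon$ set $\Psi(u)\leftarrow\Psi(u)\cap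 R_U$; the construction produces a link if $\Psi(u)\neq\emptyset$ for all $u$, and the links produced are the $\psi$ with $\psi(u)\in\Psi(u)$ for all $u$. *)

theory Defs
  imports "HOL-Analysis.Analysis"
begin

definition prob_simplex :: "('y::finite \<Rightarrow> real) set" where
  "prob_simplex = {p. (\<forall>y. 0 \<le> p y) \<and> (\<Sum>y\<in>UNIV. p y) = 1}"

definition is_property :: "(('y::finite \<Rightarrow> real) \<Rightarrow> 'r set) \<Rightarrow> bool" where
  "is_property \<gamma> \<longleftrightarrow> (\<forall>p\<in>prob_simplex. \<gamma> p \<noteq> {})"

definition finite_property :: "(('y::finite \<Rightarrow> real) \<Rightarrow> 'r set) \<Rightarrow> bool" where
  "finite_property \<gamma> \<longleftrightarrow> is_property \<gamma> \<and> finite (UNIV :: 'r set)"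

definition level_set :: "(('y::finite \<Rightarrow> real) \<Rightarrow> 'r set) \<Rightarrow> 'r \<Rightarrow> ('y \<Rightarrow> real) set" where
  "level_set \<gamma> r = {p\<in>prob_simplex. r \<in> \<gamma> p}"

definition polyhedral_loss :: "(real^'d \<Rightarrow> 'y \<Rightarrow> real) \<Rightarrow> bool" where
  "polyhedral_loss L \<longleftrightarrow>
     (\<forall>u y. 0 \<le> L u y) \<and>
     (\<forall>y. \<exists>A :: ((real^'d) \<times> real) set. finite A \<and> A \<noteq> {} \<and>
           (\<forall>u. L u y = Max ((\<lambda>(a, b). a \<bullet> u + b) ` A)))"

definition exp_loss :: "(real^'d \<Rightarrow> 'y::finite \<Rightarrow> real) \<Rightarrow> ('y \<Rightarrow> real) \<Rightarrow> real^'d \<Rightarrow> real" where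
  "exp_loss L p u = (\<Sum>y\<in>UNIV. p y * L u y)"

definition elicited :: "(real^'d \<Rightarrow> 'y::finite \<Rightarrow> real) \<Rightarrow> ('y \<Rightarrow> real) \<Rightarrow> (real^'d) set" where
  "elicited L p = {u. \<forall>u'. exp_loss L p u \<le> exp_loss L p u'}"

definition elicited_level :: "(real^'d \<Rightarrow> 'y::finite \<Rightarrow> real) \<Rightarrow> real^'d \<Rightarrow> ('y \<Rightarrow> real) set" where
  "elicited_level L u = {p\<in>prob_simplex. u \<in> elicited L p}"

definition indirectly_elicits :: "(real^'d \<Rightarrow> 'y::finite \<Rightarrow> real) \<Rightarrow> (('y \<Rightarrow> real) \<Rightarrow> 'r set) \<Rightarrow> bool" where
  "indirectly_elicits L \<gamma> \<longleftrightarrow> (\<forall>u. \<exists>r. elicited_level L u \<subseteq> level_set \<gamma> r)"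

definition opt_sets :: "(real^'d \<Rightarrow> 'y::finite \<Rightarrow> real) \<Rightarrow> (real^'d) set set" where
  "opt_sets L = {elicited L p | p. p \<in> prob_simplex}"

definition cell :: "(real^'d \<Rightarrow> 'y::finite \<Rightarrow> real) \<Rightarrow> (real^'d) set \<Rightarrow> ('y \<Rightarrow> real) set" where
  "cell L U = {p\<in>prob_simplex. elicited L p = U}"

definition reports_for :: "(real^'d \<Rightarrow> 'y::finite \<Rightarrow> real) \<Rightarrow> (('y \<Rightarrow> real) \<Rightarrow> 'r set) \<Rightarrow> (real^'d) set \<Rightarrow> 'r set" where
  "reports_for L \<gamma> U = {r. cell L U \<subseteq> level_set \<gamma> r}"

(* Link envelope Psi(u) of the epsilon-thickened construction w.r.t. the sup norm;
   inf_{u* in U} ||u* - u||_inf < eps  is unfolded as  EX u* in U. ||u* - u||_inf < eps *)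
definition link_envelope ::
  "(real^'d \<Rightarrow> 'y::finite \<Rightarrow> real) \<Rightarrow> (('y \<Rightarrow> real) \<Rightarrow> 'r set) \<Rightarrow> real \<Rightarrow> real^'d \<Rightarrow> 'r set" where
  "link_envelope L \<gamma> \<epsilon> u =
     {r. \<forall>U\<in>opt_sets L. (\<exists>us\<in>U. infnorm (us - u) < \<epsilon>) \<longrightarrow> r \<in> reports_for L \<gamma> U}"

end

theory Submission
  imports Defs
begin


lemma key_farkas:
  fixes C :: "((real^'n) \<times> real) set"
  assumes fin: "finite C" and infe: "\<forall>u. \<exists>(a,b)\<in>C. b < a \<bullet> u"
  shows "\<exists>m>0. \<forall>u. \<exists>(a,b)\<in>C. m \<le> a \<bullet> u - b"
proof -
  have Cne: "C \<noteq> {}" using infe by blast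
  define g where "g u = Max ((\<lambda>(a,b). a \<bullet> u - b) ` C)" for u
  have gge: "a \<bullet> u - b \<le> g u" if "(a,b)\<in>C" for a b u
    unfolding g_def using fin that by (intro Max_ge) force+
  have gin: "\<exists>(a,b)\<in>C. g u = a \<bullet> u - b" for u
  proof -
    have "g u \<in> (\<lambda>(a,b). a \<bullet> u - b) ` C" unfolding g_def using fin Cne by (intro Max_in) auto
    then show ?thesis by auto
  qed
  have mem: "((0::real^'n), (-1::real)) \<in> convex_cone hull C"
  proof (rule ccontr)
    assume nm: "((0::real^'n), (-1::real)) \<notin> convex_cone hull C"
    obtain z c where z: "z \<bullet> ((0::real^'n), (-1::real)) < c" "\<forall>x\<in>convex_cone hull C. c < z \<bullet> x"
      using separating_hyperplane_closed_point[OF convex_convex_cone_hull closed_convex_cone_hull[OF fin] nm]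
      by blast
    have "0 \<in> convex_cone hull C"
      using convex_cone_convex_cone_hull[of C] conic_contains_0[of "convex_cone hull C"] unfolding convex_cone_def by blast
    with z have c0: "c < 0" by force
    have nonneg: "0 \<le> z \<bullet> x" if x: "x \<in> convex_cone hull C" for x
    proof (rule ccontr)
      assume "\<not> 0 \<le> z \<bullet> x"
      then have zx: "z \<bullet> x < 0" by simp
      define t where "t = 2 * c / (z \<bullet> x)"
      have t0: "0 \<le> t" unfolding t_def using zx c0 by (simp add: divide_nonpos_neg)
      have "t *\<^sub>R x \<in> convex_cone hull C"
        using conic_convex_cone_hull[of C] x t0 unfolding conic_def by blast
      then have "c < z \<bullet> (t *\<^sub>R x)" using z by blast
      also have "z \<bullet> (t *\<^sub>R x) = 2 * c" unfolding t_def using zx by simp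
      finally show False using c0 by simp
    qed
    obtain w s where zws: "z = (w, s)" by (cases z)
    have s0: "0 < s" using z(1) c0 zws by simp
    have "\<forall>(a,b)\<in>C. a \<bullet> (- (1/s) *\<^sub>R w) \<le> b"
    proof (clarify)
      fix a b assume ab: "(a,b) \<in> C"
      then have "(a,b) \<in> convex_cone hull C" by (simp add: hull_inc)
      then have "0 \<le> w \<bullet> a + s * b" using nonneg zws by force
      then have "- (w \<bullet> a) / s \<le> b" using s0 by (simp add: field_simps)
      then show "a \<bullet> (- (1/s) *\<^sub>R w) \<le> b" by (simp add: inner_commute)
    qed
    moreover obtain a b where "(a,b) \<in> C" "b < a \<bullet> (- (1/s) *\<^sub>R w)"
      using infe by blast
    ultimately show False by fastforce
  qed
  define Q where "Q x \<longleftrightarrow> (\<exists>\<Lambda>\<ge>0. \<forall>u. fst x \<bullet> u - snd x \<le> \<Lambda> * g u)" for x :: "(real^'n) \<times> real"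
  have cc: "convex_cone {x. Q x}"
    unfolding convex_cone_def
  proof (intro conjI)
    show "{x. Q x} \<noteq> {}"
    proof -
      have "Q 0" unfolding Q_def by (intro exI[of _ 0]) auto
      then show ?thesis by blast
    qed
    show "convex {x. Q x}"
      unfolding convex_def
    proof (clarify)
      fix x y :: "(real^'n) \<times> real" and t1 t2 :: real
      assume qx: "Q x" and qy: "Q y" and t: "0 \<le> t1" "0 \<le> t2" "t1 + t2 = 1"
      obtain l1 where l1: "l1 \<ge> 0" "\<forall>u. fst x \<bullet> u - snd x \<le> l1 * g u" using qx Q_def by blast
      obtain l2 where l2: "l2 \<ge> 0" "\<forall>u. fst y \<bullet> u - snd y \<le> l2 * g u" using qy Q_def by blast
      show "Q (t1 *\<^sub>R x + t2 *\<^sub>R y)"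
        unfolding Q_def
      proof (intro exI[of _ "t1 * l1 + t2 * l2"] conjI allI)
        show "0 \<le> t1 * l1 + t2 * l2" using t l1 l2 by simp
        fix u
        have "t1 * (fst x \<bullet> u - snd x) \<le> t1 * (l1 * g u)" using l1 t by (intro mult_left_mono) auto
        moreover have "t2 * (fst y \<bullet> u - snd y) \<le> t2 * (l2 * g u)" using l2 t by (intro mult_left_mono) auto
        ultimately show "fst (t1 *\<^sub>R x + t2 *\<^sub>R y) \<bullet> u - snd (t1 *\<^sub>R x + t2 *\<^sub>R y) \<le> (t1 * l1 + t2 * l2) * g u"
          by (simp add: inner_add_left algebra_simps)
      qed
    qed
    show "conic {x. Q x}"
      unfolding conic_def
    proof (clarify)
      fix x :: "(real^'n) \<times> real" and c :: real
      assume qx: "Q x" and c: "0 \<le> c"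
      obtain l1 where l1: "l1 \<ge> 0" "\<forall>u. fst x \<bullet> u - snd x \<le> l1 * g u" using qx Q_def by blast
      show "Q (c *\<^sub>R x)"
        unfolding Q_def
      proof (intro exI[of _ "c * l1"] conjI allI)
        show "0 \<le> c * l1" using c l1 by simp
        fix u
        have "c * (fst x \<bullet> u - snd x) \<le> c * (l1 * g u)" using l1 c by (intro mult_left_mono) auto
        then show "fst (c *\<^sub>R x) \<bullet> u - snd (c *\<^sub>R x) \<le> c * l1 * g u"
          by (simp add: algebra_simps)
      qed
    qed
  qed
  have "C \<subseteq> {x. Q x}"
    unfolding Q_def using gge by (force intro: exI[of _ 1])
  then have "convex_cone hull C \<subseteq> {x. Q x}"
    using cc by (rule hull_minimal)
  with mem have "Q ((0::real^'n), (-1::real))" by blast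
  then obtain l where l: "l \<ge> 0" "\<forall>u. 1 \<le> l * g u" unfolding Q_def by auto
  have lpos: "l > 0" using l by (metis less_eq_real_def mult_zero_left not_one_le_zero)
  show ?thesis
  proof (intro exI[of _ "1 / l"] conjI allI)
    show "0 < 1 / l" using lpos by simp
    fix u
    obtain a b where ab: "(a,b) \<in> C" "g u = a \<bullet> u - b" using gin[of u] by blast
    have "1 / l \<le> g u" using l(2) lpos by (simp add: field_simps mult.commute)
    then show "\<exists>(a,b)\<in>C. 1 / l \<le> a \<bullet> u - b" using ab by auto
  qed
qed



definition act :: "('y \<Rightarrow> ((real^'d) \<times> real) set) \<Rightarrow> (real^'d \<Rightarrow> 'y \<Rightarrow> real) \<Rightarrow> real^'d \<Rightarrow> 'y \<Rightarrow> ((real^'d) \<times> real) set" where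
  "act A L u = (\<lambda>y. {ab \<in> A y. fst ab \<bullet> u + snd ab = L u y})"

lemma A_ge:
  assumes A: "\<forall>y. finite (A y) \<and> A y \<noteq> {} \<and> (\<forall>u. L u y = Max ((\<lambda>(a, b). a \<bullet> u + b) ` A y))"
    and "ab \<in> A y"
  shows "fst ab \<bullet> v + snd ab \<le> L v y"
proof -
  have "fst ab \<bullet> v + snd ab \<le> Max ((\<lambda>(a, b). a \<bullet> v + b) ` A y)"
    using A assms(2) by (intro Max_ge) (auto intro!: image_eqI[of _ _ ab] simp: case_prod_beta)
  then show ?thesis using A by metis
qed

lemma A_ex:
  assumes A: "\<forall>y. finite (A y) \<and> A y \<noteq> {} \<and> (\<forall>u. L u y = Max ((\<lambda>(a, b). a \<bullet> u + b) ` A y))"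
  shows "\<exists>ab\<in>A y. fst ab \<bullet> v + snd ab = L v y"
proof -
  have "Max ((\<lambda>(a, b). a \<bullet> v + b) ` A y) \<in> (\<lambda>(a, b). a \<bullet> v + b) ` A y"
    using A by (intro Max_in) auto
  then show ?thesis using A by (metis (no_types, lifting) case_prod_beta imageE)
qed

lemma same_act:
  fixes L :: "real^'d \<Rightarrow> 'y::finite \<Rightarrow> real"
  assumes A: "\<forall>y. finite (A y) \<and> A y \<noteq> {} \<and> (\<forall>u. L u y = Max ((\<lambda>(a, b). a \<bullet> u + b) ` A y))"
    and eq: "act A L u = act A L u'" and opt: "u \<in> elicited L p"
  shows "u' \<in> elicited L p"
proof -
  have "\<forall>y. \<exists>ab. ab \<in> A y \<and> fst ab \<bullet> u + snd ab = L u y" using A_ex[OF A] by blast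
  then obtain s where s: "\<And>y. s y \<in> A y" "\<And>y. fst (s y) \<bullet> u + snd (s y) = L u y" by metis
  have s': "fst (s y) \<bullet> u' + snd (s y) = L u' y" for y
  proof -
    have "s y \<in> act A L u y" using s unfolding act_def by auto
    then have "s y \<in> act A L u' y" using eq by simp
    then show ?thesis unfolding act_def by auto
  qed
  define h where "h = u' - u"
  define w where "w t = u + t *\<^sub>R h" for t :: real
  have wkey: "fst ab \<bullet> w t + snd ab = (1-t) * (fst ab \<bullet> u + snd ab) + t * (fst ab \<bullet> u' + snd ab)" for ab t
    by (simp add: w_def h_def inner_add_right inner_diff_right algebra_simps)
  have ev: "eventually (\<lambda>t. \<forall>y. L (w t) y = fst (s y) \<bullet> w t + snd (s y)) (at 0)"
  proof (rule eventually_all_finite)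
    fix y
    have "eventually (\<lambda>t. \<forall>ab\<in>A y. fst ab \<bullet> w t + snd ab \<le> fst (s y) \<bullet> w t + snd (s y)) (at 0)"
    proof (rule eventually_ball_finite)
      show "finite (A y)" using A by blast
      show "\<forall>ab\<in>A y. eventually (\<lambda>t. fst ab \<bullet> w t + snd ab \<le> fst (s y) \<bullet> w t + snd (s y)) (at 0)"
      proof
        fix ab assume ab: "ab \<in> A y"
        show "eventually (\<lambda>t. fst ab \<bullet> w t + snd ab \<le> fst (s y) \<bullet> w t + snd (s y)) (at 0)"
        proof (cases "ab \<in> act A L u y")
          case True
          then have "ab \<in> act A L u' y" using eq by simp
          then have e2: "fst ab \<bullet> u' + snd ab = L u' y" unfolding act_def by auto
          have e1: "fst ab \<bullet> u + snd ab = L u y" using True unfolding act_def by auto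
          have "fst ab \<bullet> w t + snd ab = fst (s y) \<bullet> w t + snd (s y)" for t
            using wkey[of ab t] wkey[of "s y" t] e1 e2 s s' by simp
          then show ?thesis by simp
        next
          case False
          have "fst ab \<bullet> u + snd ab \<le> L u y" using A_ge[OF A ab] .
          with False ab have lt: "fst ab \<bullet> u + snd ab < L u y" unfolding act_def by auto
          define G where "G t = (fst (s y) \<bullet> w t + snd (s y)) - (fst ab \<bullet> w t + snd ab)" for t
          have "isCont G 0" unfolding G_def w_def by (intro continuous_intros)
          then have lim: "(G \<longlongrightarrow> G 0) (at 0)" by (simp add: isCont_def)
          have "G 0 > 0" unfolding G_def w_def using lt s by simp
          then have "eventually (\<lambda>t. 0 < G t) (at 0)" using order_tendstoD(1)[OF lim] by blast
          then show ?thesis by eventually_elim (simp add: G_def)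
        qed
      qed
    qed
    then show "eventually (\<lambda>t. L (w t) y = fst (s y) \<bullet> w t + snd (s y)) (at 0)"
    proof eventually_elim
      case (elim t)
      have "Max ((\<lambda>(a, b). a \<bullet> w t + b) ` A y) = fst (s y) \<bullet> w t + snd (s y)"
        using A elim s(1) by (intro Max_eqI) (auto intro!: image_eqI[of _ _ "s y"] simp: case_prod_beta)
      then show ?case using A by metis
    qed
  qed
  then obtain d where d: "d > 0" "\<And>t. t \<noteq> 0 \<Longrightarrow> dist t 0 < d \<Longrightarrow> \<forall>y. L (w t) y = fst (s y) \<bullet> w t + snd (s y)"
    unfolding eventually_at by blast
  define c where "c = (\<Sum>y\<in>UNIV. p y * (fst (s y) \<bullet> h))"
  have lin: "exp_loss L p (w t) = exp_loss L p u + t * c" if "t \<noteq> 0" "dist t 0 < d" for t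
  proof -
    have "exp_loss L p (w t) = (\<Sum>y\<in>UNIV. p y * (fst (s y) \<bullet> w t + snd (s y)))"
      unfolding exp_loss_def using d(2)[OF that] by simp
    also have "\<dots> = (\<Sum>y\<in>UNIV. p y * L u y + t * (p y * (fst (s y) \<bullet> h)))"
      by (rule sum.cong) (auto simp: w_def inner_add_right s(2)[symmetric] algebra_simps)
    also have "\<dots> = exp_loss L p u + t * c"
      by (simp add: sum.distrib exp_loss_def c_def sum_distrib_left)
    finally show ?thesis .
  qed
  have u'val: "exp_loss L p u' = exp_loss L p u + c"
  proof -
    have "exp_loss L p u' = (\<Sum>y\<in>UNIV. p y * (fst (s y) \<bullet> u' + snd (s y)))"
      unfolding exp_loss_def using s' by simp
    also have "\<dots> = (\<Sum>y\<in>UNIV. p y * L u y + p y * (fst (s y) \<bullet> h))"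
      by (rule sum.cong) (auto simp: h_def inner_diff_right s(2)[symmetric] algebra_simps)
    also have "\<dots> = exp_loss L p u + c"
      by (simp add: sum.distrib exp_loss_def c_def)
    finally show ?thesis .
  qed
  have optu: "exp_loss L p u \<le> exp_loss L p v" for v using opt unfolding elicited_def by blast
  have c0: "c = 0"
  proof (rule ccontr)
    assume cn: "c \<noteq> 0"
    define t where "t = (if c > 0 then - d / 2 else d / 2)"
    have t: "t \<noteq> 0" "dist t 0 < d" using d(1) unfolding t_def by auto
    have "t * c < 0" using cn d(1) unfolding t_def by (auto simp: mult_neg_pos mult_pos_neg)
    then have "exp_loss L p (w t) < exp_loss L p u" using lin[OF t] by simp
    then show False using optu[of "w t"] by simp
  qed
  show ?thesis unfolding elicited_def using u'val c0 optu by simp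
qed



lemma opt_sets_finite:
  fixes L :: "real^'d \<Rightarrow> 'y::finite \<Rightarrow> real"
  assumes A: "\<forall>y. finite (A y) \<and> A y \<noteq> {} \<and> (\<forall>u. L u y = Max ((\<lambda>(a, b). a \<bullet> u + b) ` A y))"
  shows "finite (opt_sets L)"
proof -
  have sub: "opt_sets L \<subseteq> (\<lambda>S. (act A L) -` S) ` Pow (range (act A L))"
  proof
    fix U assume "U \<in> opt_sets L"
    then obtain p where U: "U = elicited L p" unfolding opt_sets_def by blast
    have "U = (act A L) -` ((act A L) ` U)"
    proof
      show "U \<subseteq> act A L -` act A L ` U" by blast
      show "act A L -` act A L ` U \<subseteq> U"
      proof
        fix v assume "v \<in> act A L -` act A L ` U"
        then obtain u where "u \<in> U" "act A L v = act A L u" by auto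
        then show "v \<in> U" using same_act[OF A, of u v p] U by simp
      qed
    qed
    then show "U \<in> (\<lambda>S. (act A L) -` S) ` Pow (range (act A L))" by blast
  qed
  have "range (act A L) \<subseteq> PiE UNIV (\<lambda>y. Pow (A y))"
    unfolding PiE_UNIV_domain act_def by auto
  moreover have "finite (PiE UNIV (\<lambda>y. Pow (A y)))"
    using A by (intro finite_PiE) auto
  ultimately have "finite (range (act A L))" by (rule finite_subset)
  then have "finite ((\<lambda>S. (act A L) -` S) ` Pow (range (act A L)))" by simp
  then show ?thesis using sub by (rule finite_subset[rotated])
qed


lemma opt_poly:
  fixes L :: "real^'d \<Rightarrow> 'y::finite \<Rightarrow> real"
  assumes A: "\<forall>y. finite (A y) \<and> A y \<noteq> {} \<and> (\<forall>u. L u y = Max ((\<lambda>(a, b). a \<bullet> u + b) ` A y))"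
    and p: "p \<in> prob_simplex" and u0: "u0 \<in> elicited L p"
  shows "\<exists>C. finite C \<and> elicited L p = {u. \<forall>(a,b)\<in>C. a \<bullet> u \<le> b}"
proof -
  define m where "m = exp_loss L p u0"
  define S where "S = PiE UNIV A"
  define C where "C = (\<lambda>s. ((\<Sum>y\<in>UNIV. p y *\<^sub>R fst (s y)), m - (\<Sum>y\<in>UNIV. p y * snd (s y)))) ` S"
  have finC: "finite C" unfolding C_def S_def using A by (intro finite_imageI finite_PiE) auto
  have pnn: "0 \<le> p y" for y using p unfolding prob_simplex_def by auto
  have iff1: "u \<in> elicited L p \<longleftrightarrow> exp_loss L p u \<le> m" for u
    using u0 unfolding elicited_def m_def by (auto intro: order_trans)
  have iff2: "exp_loss L p u \<le> m \<longleftrightarrow> (\<forall>s\<in>S. (\<Sum>y\<in>UNIV. p y * (fst (s y) \<bullet> u + snd (s y))) \<le> m)" for u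
  proof
    assume le: "exp_loss L p u \<le> m"
    show "\<forall>s\<in>S. (\<Sum>y\<in>UNIV. p y * (fst (s y) \<bullet> u + snd (s y))) \<le> m"
    proof
      fix s assume "s \<in> S"
      then have sA: "s y \<in> A y" for y unfolding S_def PiE_UNIV_domain by auto
      have "(\<Sum>y\<in>UNIV. p y * (fst (s y) \<bullet> u + snd (s y))) \<le> exp_loss L p u"
        unfolding exp_loss_def
        by (intro sum_mono mult_left_mono A_ge[OF A sA] pnn)
      then show "(\<Sum>y\<in>UNIV. p y * (fst (s y) \<bullet> u + snd (s y))) \<le> m" using le by simp
    qed
  next
    assume all: "\<forall>s\<in>S. (\<Sum>y\<in>UNIV. p y * (fst (s y) \<bullet> u + snd (s y))) \<le> m"
    have "\<forall>y. \<exists>ab. ab \<in> A y \<and> fst ab \<bullet> u + snd ab = L u y" using A_ex[OF A] by blast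
    then obtain s where s: "\<And>y. s y \<in> A y" "\<And>y. fst (s y) \<bullet> u + snd (s y) = L u y" by metis
    have "s \<in> S" unfolding S_def PiE_UNIV_domain using s by auto
    then have "(\<Sum>y\<in>UNIV. p y * (fst (s y) \<bullet> u + snd (s y))) \<le> m" using all by blast
    then show "exp_loss L p u \<le> m" unfolding exp_loss_def using s(2) by simp
  qed
  have iff3: "(\<Sum>y\<in>UNIV. p y * (fst (s y) \<bullet> u + snd (s y))) \<le> m \<longleftrightarrow>
      (\<Sum>y\<in>UNIV. p y *\<^sub>R fst (s y)) \<bullet> u \<le> m - (\<Sum>y\<in>UNIV. p y * snd (s y))" for s u
  proof -
    have "(\<Sum>y\<in>UNIV. p y * (fst (s y) \<bullet> u + snd (s y))) = (\<Sum>y\<in>UNIV. p y *\<^sub>R fst (s y)) \<bullet> u + (\<Sum>y\<in>UNIV. p y * snd (s y))"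
      by (simp add: inner_sum_left distrib_left sum.distrib)
    then show ?thesis by linarith
  qed
  have "elicited L p = {u. \<forall>(a,b)\<in>C. a \<bullet> u \<le> b}"
  proof -
    have "u \<in> elicited L p \<longleftrightarrow> (\<forall>(a,b)\<in>C. a \<bullet> u \<le> b)" for u
      unfolding iff1 iff2 iff3 C_def by (simp add: ball_simps)
    then show ?thesis by blast
  qed
  then show ?thesis using finC by blast
qed



lemma bad_delta:
  fixes L :: "real^'d \<Rightarrow> 'y::finite \<Rightarrow> real"
  assumes A: "\<forall>y. finite (A y) \<and> A y \<noteq> {} \<and> (\<forall>u. L u y = Max ((\<lambda>(a, b). a \<bullet> u + b) ` A y))"
    and F: "F \<subseteq> opt_sets L - {{}}" and emp: "\<Inter>F = {}"
  shows "\<exists>\<delta>>0. \<forall>u. \<not> (\<forall>U\<in>F. \<exists>v\<in>U. infnorm (v - u) < \<delta>)"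
proof -
  have finF: "finite F" using finite_subset[OF _ opt_sets_finite[OF A], of F] F by blast
  have "\<forall>U\<in>F. \<exists>C. finite C \<and> U = {u. \<forall>(a,b)\<in>C. a \<bullet> u \<le> b}"
  proof
    fix U assume U: "U \<in> F"
    then obtain p where p: "p \<in> prob_simplex" "U = elicited L p" using F unfolding opt_sets_def by blast
    obtain u0 where "u0 \<in> U" using U F by blast
    then show "\<exists>C. finite C \<and> U = {u. \<forall>(a,b)\<in>C. a \<bullet> u \<le> b}" using opt_poly[OF A p(1)] p by simp
  qed
  then obtain CC where CC0: "\<forall>U\<in>F. finite (CC U) \<and> U = {u. \<forall>(a,b)\<in>CC U. a \<bullet> u \<le> b}"
    by (rule bchoice[elim_format]) blast
  have CC: "\<And>U. U \<in> F \<Longrightarrow> finite (CC U)" "\<And>U. U \<in> F \<Longrightarrow> U = {u. \<forall>(a,b)\<in>CC U. a \<bullet> u \<le> b}"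
    using CC0 by auto
  define CA where "CA = (\<Union>U\<in>F. CC U)"
  have finCA: "finite CA" unfolding CA_def using finF CC(1) by (intro finite_UN_I)
  have infe: "\<forall>u. \<exists>(a,b)\<in>CA. b < a \<bullet> u"
  proof
    fix u
    obtain U where U: "U \<in> F" "u \<notin> U" using emp by blast
    then obtain a b where "(a,b) \<in> CC U" "\<not> a \<bullet> u \<le> b" using CC(2)[OF U(1)] by blast
    then show "\<exists>(a,b)\<in>CA. b < a \<bullet> u" using U(1) unfolding CA_def by force
  qed
  obtain m where m: "m > 0" "\<forall>u. \<exists>(a,b)\<in>CA. m \<le> a \<bullet> u - b" using key_farkas[OF finCA infe] by blast
  define K where "K = Max (insert 0 ((\<lambda>ab. norm (fst ab)) ` CA))"
  have K0: "0 \<le> K" unfolding K_def using finCA by simp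
  have Kge: "norm a \<le> K" if "(a,b) \<in> CA" for a b
    unfolding K_def using finCA that by (intro Max_ge) (auto intro!: image_eqI[of _ _ "(a,b)"])
  define D where "D = K * sqrt (real DIM(real^'d)) + 1"
  have D1: "1 \<le> D" unfolding D_def using K0 by simp
  define \<delta> where "\<delta> = m / D"
  have \<delta>0: "\<delta> > 0" unfolding \<delta>_def using m D1 by simp
  show ?thesis
  proof (intro exI[of _ \<delta>] conjI allI notI)
    show "0 < \<delta>" by fact
    fix u assume near: "\<forall>U\<in>F. \<exists>v\<in>U. infnorm (v - u) < \<delta>"
    obtain a b where ab: "(a,b) \<in> CA" "m \<le> a \<bullet> u - b" using m(2) by blast
    then obtain U where U: "U \<in> F" "(a,b) \<in> CC U" unfolding CA_def by blast
    obtain v where v: "v \<in> U" "infnorm (v - u) < \<delta>" using near U(1) by blast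
    have av: "a \<bullet> v \<le> b" using CC(2)[OF U(1)] v(1) U(2) by blast
    have "a \<bullet> u - a \<bullet> v = a \<bullet> (u - v)" by (simp add: inner_diff_right)
    also have "\<dots> \<le> norm a * norm (u - v)" by (rule norm_cauchy_schwarz)
    also have "\<dots> \<le> K * (sqrt (real DIM(real^'d)) * infnorm (u - v))"
      by (intro mult_mono Kge[OF ab(1)] norm_le_infnorm K0) simp_all
    also have "\<dots> \<le> K * (sqrt (real DIM(real^'d)) * \<delta>)"
      using v(2) K0 by (intro mult_left_mono) (simp_all add: infnorm_sub)
    also have "\<dots> < D * \<delta>" unfolding D_def using \<delta>0 by (simp add: algebra_simps)
    also have "\<dots> = m" unfolding \<delta>_def using D1 by simp
    finally show False using ab(2) av by simp
  qed
qed

theorem proposition8: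
  fixes L :: "real^'d \<Rightarrow> 'y::finite \<Rightarrow> real"
    and \<gamma> :: "('y \<Rightarrow> real) \<Rightarrow> 'r set"
  assumes "polyhedral_loss L"
    and "finite_property \<gamma>"
    and "indirectly_elicits L \<gamma>"
  shows "\<exists>\<epsilon>0>0. \<forall>\<epsilon>. 0 < \<epsilon> \<and> \<epsilon> \<le> \<epsilon>0 \<longrightarrow> (\<forall>u. link_envelope L \<gamma> \<epsilon> u \<noteq> {})"
proof -
  have "\<forall>y. \<exists>A :: ((real^'d) \<times> real) set. finite A \<and> A \<noteq> {} \<and> (\<forall>u. L u y = Max ((\<lambda>(a, b). a \<bullet> u + b) ` A))"
    using assms(1) unfolding polyhedral_loss_def by blast
  then obtain A where A: "\<forall>y. finite (A y) \<and> A y \<noteq> {} \<and> (\<forall>u. L u y = Max ((\<lambda>(a, b). a \<bullet> u + b) ` A y))"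
    by metis
  define Bad where "Bad = {F. F \<subseteq> opt_sets L - {{}} \<and> \<Inter>F = {}}"
  have finBad: "finite Bad"
  proof -
    have "Bad \<subseteq> Pow (opt_sets L)" unfolding Bad_def by blast
    moreover have "finite (Pow (opt_sets L))" using opt_sets_finite[OF A] by simp
    ultimately show ?thesis by (rule finite_subset)
  qed
  have "\<forall>F\<in>Bad. \<exists>\<delta>>0. \<forall>u. \<not> (\<forall>U\<in>F. \<exists>v\<in>U. infnorm (v - u) < \<delta>)"
    unfolding Bad_def using bad_delta[OF A] by blast
  then obtain dF where dF: "\<And>F. F \<in> Bad \<Longrightarrow> dF F > 0"
      "\<And>F u. F \<in> Bad \<Longrightarrow> \<not> (\<forall>U\<in>F. \<exists>v\<in>U. infnorm (v - u) < dF F)"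
    by metis
  define e0 where "e0 = Min (insert 1 (dF ` Bad))"
  have e0pos: "e0 > 0" unfolding e0_def using finBad dF(1) by (subst Min_gr_iff) auto
  have e0le: "e0 \<le> dF F" if "F \<in> Bad" for F unfolding e0_def using finBad that by (intro Min_le) auto
  show ?thesis
  proof (intro exI[of _ e0] conjI allI impI)
    show "0 < e0" by fact
    fix \<epsilon> u assume \<epsilon>: "0 < \<epsilon> \<and> \<epsilon> \<le> e0"
    define F where "F = {U \<in> opt_sets L. \<exists>us\<in>U. infnorm (us - u) < \<epsilon>}"
    have "\<Inter>F \<noteq> {}"
    proof
      assume emp: "\<Inter>F = {}"
      have "F \<in> Bad" unfolding Bad_def F_def using emp[unfolded F_def] by blast
      moreover have "\<forall>U\<in>F. \<exists>v\<in>U. infnorm (v - u) < dF F"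
      proof
        fix U assume "U \<in> F"
        then obtain v where "v \<in> U" "infnorm (v - u) < \<epsilon>" unfolding F_def by blast
        moreover have "\<epsilon> \<le> dF F" using e0le[OF \<open>F \<in> Bad\<close>] \<epsilon> by simp
        ultimately show "\<exists>v\<in>U. infnorm (v - u) < dF F" by force
      qed
      ultimately show False using dF(2) by blast
    qed
    then obtain us where us: "us \<in> \<Inter>F" by blast
    obtain r where r: "elicited_level L us \<subseteq> level_set \<gamma> r"
      using assms(3) unfolding indirectly_elicits_def by blast
    have "r \<in> link_envelope L \<gamma> \<epsilon> u"
      unfolding link_envelope_def
    proof (clarify)
      fix U v assume U: "U \<in> opt_sets L" "v \<in> U" "infnorm (v - u) < \<epsilon>"
      then have "U \<in> F" unfolding F_def by blast
      then have usU: "us \<in> U" using us by blast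
      show "r \<in> reports_for L \<gamma> U"
        unfolding reports_for_def
      proof (clarify)
        fix p assume "p \<in> cell L U"
        then have "p \<in> prob_simplex" "elicited L p = U" unfolding cell_def by auto
        then have "p \<in> elicited_level L us" unfolding elicited_level_def using usU by simp
        then show "p \<in> level_set \<gamma> r" using r by blast
      qed
    qed
    then show "link_envelope L \<gamma> \<epsilon> u \<noteq> {}" by blast
  qed
qed

end
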